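(* Let $\Sigma,O$ be nominal $\mathrm{Sb}$-sets with $\dim(\Sigma)\le1$. Let $\mathcal{A}=(Q,\delta,o,q_0)$ be a nominal automaton with input alphabet $U\Sigma$ and output alphabet $UO$, and let $L\colon\Sigma^*\to O$ be the language accepted by $\mathcal{A}$. Suppose $L$ is $\mathrm{Sb}$-equivariant. Let $S\colon(U\Sigma)^{( * )}\to UO$ be the separated language accepted by the separated automaton $\mathcal{A}_*$. Then $L=\overline{S}$, where $\overline{S}\colon\Sigma^*\to O$ is the unique $\mathrm{Sb}$-equivariant function whose restriction to separated words is $S$.
   Context: Atoms $\mathbb{A}$ (countably infinite); $\mathrm{Sb}$ = monoid of functions $\mathbb{A}\to\mathbb{A}$ that are the identity outside a finite set; $\mathrm{Perm}$ its bijections. For $M\in\{\mathrm{Sb},\mathrm{Perm}\}$ a nominal $M$-set is an $M$-set whose elements $x$ have finite supports $C$ ($m_1|_C=m_2|_C\Rightarrow m_1x=m_2x$, $m_i\in M$); $\mathrm{supp}(x)$ is the least one; $\dim(X)=\max_x|\mathrm{supp}(x)|$. $U$ restricts $\mathrm{Sb}$-actions to $\mathrm{Perm}$. $x\perp y$ means disjoint supports; $A\otimes B=\{(a,b)\mid a\perp b\}$. $\Sigma^*$ is the set of words with pointwise action; $(U\Sigma)^{( * )}$ is the set of separated words (letters with pairwise disjoint supports). A nominal automaton $(Q,\delta,o,q_0)$ over input $\Sigma'$ and output $O'$ (nominal $\mathrm{Perm}$-sets) consists of a nominal $\mathrm{Perm}$-set $Q$, equivariant $\delta\colon Q\times\Sigma'\to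 Q$, equivariant $o\colon Q\to O'$, and $q_0\in Q$ with empty support; its semantics $l(x,\varepsilon)=o(x)$, $l(x,aw)=l(\delta(x,a),w)$, and its accepted language is $w\mapsto l(q_0,w)$. The separated automaton $\mathcal{A}_*=(Q,\delta|_{Q\otimes\Sigma'},o,q_0)$ has separated semantics $s$, defined on pairs $(x,w)$ with $w$ a separated word and $x\perp w$, by $s(x,\varepsilon)=o(x)$ and $s(x,aw)=s(\delta(x,a),w)$ whenever $x\perp aw$ and $a\perp w$; its accepted separated language is $w\mapsto s(q_0,w)$ on separated words. (A unique $\mathrm{Sb}$-equivariant extension $\overline{S}$ of any $\mathrm{Perm}$-equivariant $S\colon(U\Sigma)^{( * )}\to UO$ exists when $\dim\Sigma\le1$.) *)

theory Defs
  imports Main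
begin

type_synonym atom = nat

definition Sb :: "(atom \<Rightarrow> atom) set" where
  "Sb = {f. finite {a. f a \<noteq> a}}"

definition Perm :: "(atom \<Rightarrow> atom) set" where
  "Perm = {f \<in> Sb. bij f}"

definition is_Mset :: "(atom \<Rightarrow> atom) set \<Rightarrow> ((atom \<Rightarrow> atom) \<Rightarrow> 'x \<Rightarrow> 'x) \<Rightarrow> bool" where
  "is_Mset M act \<longleftrightarrow> (\<forall>x. act id x = x) \<and>
     (\<forall>m1\<in>M. \<forall>m2\<in>M. \<forall>x. act (m1 \<circ> m2) x = act m1 (act m2 x))"

definition supports :: "(atom \<Rightarrow> atom) set \<Rightarrow> ((atom \<Rightarrow> atom) \<Rightarrow> 'x \<Rightarrow> 'x) \<Rightarrow> atom set \<Rightarrow> 'x \<Rightarrow> bool" where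
  "supports M act C x \<longleftrightarrow>
     (\<forall>m1\<in>M. \<forall>m2\<in>M. (\<forall>a\<in>C. m1 a = m2 a) \<longrightarrow> act m1 x = act m2 x)"

definition nominal :: "(atom \<Rightarrow> atom) set \<Rightarrow> ((atom \<Rightarrow> atom) \<Rightarrow> 'x \<Rightarrow> 'x) \<Rightarrow> bool" where
  "nominal M act \<longleftrightarrow> is_Mset M act \<and> (\<forall>x. \<exists>C. finite C \<and> supports M act C x)"

text \<open>The least finite support (the intersection of all finite supports; for
  nominal sets this is itself a support).\<close>
definition supp :: "(atom \<Rightarrow> atom) set \<Rightarrow> ((atom \<Rightarrow> atom) \<Rightarrow> 'x \<Rightarrow> 'x) \<Rightarrow> 'x \<Rightarrow> atom set" where
  "supp M act x = \<Inter>{C. finite C \<and> supports M act C x}"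

definition dim_le_1 :: "(atom \<Rightarrow> atom) set \<Rightarrow> ((atom \<Rightarrow> atom) \<Rightarrow> 'x \<Rightarrow> 'x) \<Rightarrow> bool" where
  "dim_le_1 M act \<longleftrightarrow> (\<forall>x. card (supp M act x) \<le> 1)"

definition wact :: "((atom \<Rightarrow> atom) \<Rightarrow> 'x \<Rightarrow> 'x) \<Rightarrow> (atom \<Rightarrow> atom) \<Rightarrow> 'x list \<Rightarrow> 'x list" where
  "wact act m w = map (act m) w"

definition equivariant :: "(atom \<Rightarrow> atom) set \<Rightarrow> ((atom \<Rightarrow> atom) \<Rightarrow> 'x \<Rightarrow> 'x) \<Rightarrow>
    ((atom \<Rightarrow> atom) \<Rightarrow> 'y \<Rightarrow> 'y) \<Rightarrow> ('x \<Rightarrow> 'y) \<Rightarrow> bool" where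
  "equivariant M actX actY f \<longleftrightarrow> (\<forall>m\<in>M. \<forall>x. f (actX m x) = actY m (f x))"

definition separated :: "((atom \<Rightarrow> atom) \<Rightarrow> 'x \<Rightarrow> 'x) \<Rightarrow> 'x list \<Rightarrow> bool" where
  "separated act w \<longleftrightarrow> (\<forall>i<length w. \<forall>j<length w. i \<noteq> j \<longrightarrow>
      supp Perm act (w ! i) \<inter> supp Perm act (w ! j) = {})"

text \<open>Nominal automaton (Q, delta, o, q0) over input U Sigma and output U O
  (all actions restricted to Perm).\<close>
definition nominal_automaton ::
  "((atom \<Rightarrow> atom) \<Rightarrow> 'q \<Rightarrow> 'q) \<Rightarrow> ((atom \<Rightarrow> atom) \<Rightarrow> 's \<Rightarrow> 's) \<Rightarrow> ((atom \<Rightarrow> atom) \<Rightarrow> 'o \<Rightarrow> 'o) \<Rightarrow>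
   ('q \<Rightarrow> 's \<Rightarrow> 'q) \<Rightarrow> ('q \<Rightarrow> 'o) \<Rightarrow> 'q \<Rightarrow> bool" where
  "nominal_automaton actQ actS actO \<delta> out q0 \<longleftrightarrow>
     nominal Perm actQ \<and> nominal Perm actS \<and> nominal Perm actO \<and>
     (\<forall>m\<in>Perm. \<forall>q a. \<delta> (actQ m q) (actS m a) = actQ m (\<delta> q a)) \<and>
     equivariant Perm actQ actO out \<and>
     supp Perm actQ q0 = {}"

fun sem :: "('q \<Rightarrow> 's \<Rightarrow> 'q) \<Rightarrow> ('q \<Rightarrow> 'o) \<Rightarrow> 'q \<Rightarrow> 's list \<Rightarrow> 'o" where
  "sem \<delta> out x [] = out x"
| "sem \<delta> out x (a # w) = sem \<delta> out (\<delta> x a) w"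

definition accepted :: "('q \<Rightarrow> 's \<Rightarrow> 'q) \<Rightarrow> ('q \<Rightarrow> 'o) \<Rightarrow> 'q \<Rightarrow> 's list \<Rightarrow> 'o" where
  "accepted \<delta> out q0 w = sem \<delta> out q0 w"

text \<open>Separated semantics s of the separated automaton: partial, None outside
  its domain. delta is only ever used on pairs in Q \<otimes> Sigma (since x \<perp> aw).\<close>
fun sep_sem :: "((atom \<Rightarrow> atom) \<Rightarrow> 'q \<Rightarrow> 'q) \<Rightarrow> ((atom \<Rightarrow> atom) \<Rightarrow> 's \<Rightarrow> 's) \<Rightarrow>
    ('q \<Rightarrow> 's \<Rightarrow> 'q) \<Rightarrow> ('q \<Rightarrow> 'o) \<Rightarrow> 'q \<Rightarrow> 's list \<Rightarrow> 'o option" where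
  "sep_sem actQ actS \<delta> out x [] = Some (out x)"
| "sep_sem actQ actS \<delta> out x (a # w) =
     (if supp Perm actQ x \<inter> supp Perm (wact actS) (a # w) = {} \<and>
         supp Perm actS a \<inter> supp Perm (wact actS) w = {}
      then sep_sem actQ actS \<delta> out (\<delta> x a) w else None)"

definition sep_accepted :: "((atom \<Rightarrow> atom) \<Rightarrow> 'q \<Rightarrow> 'q) \<Rightarrow> ((atom \<Rightarrow> atom) \<Rightarrow> 's \<Rightarrow> 's) \<Rightarrow>
    ('q \<Rightarrow> 's \<Rightarrow> 'q) \<Rightarrow> ('q \<Rightarrow> 'o) \<Rightarrow> 'q \<Rightarrow> 's list \<Rightarrow> 'o option" where
  "sep_accepted actQ actS \<delta> out q0 w =
     (if separated actS w \<and> supp Perm actQ q0 \<inter> supp Perm (wact actS) w = {}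
      then sep_sem actQ actS \<delta> out q0 w else None)"

definition Sb_ext :: "((atom \<Rightarrow> atom) \<Rightarrow> 's \<Rightarrow> 's) \<Rightarrow> ((atom \<Rightarrow> atom) \<Rightarrow> 'o \<Rightarrow> 'o) \<Rightarrow>
    ('s list \<Rightarrow> 'o option) \<Rightarrow> 's list \<Rightarrow> 'o" where
  "Sb_ext actS actO S = (THE F. equivariant Sb (wact actS) actO F \<and>
      (\<forall>w. separated actS w \<longrightarrow> S w = Some (F w)))"

end

theory Submission
  imports Defs
begin

lemma supp_le: "finite C \<Longrightarrow> supports M act C x \<Longrightarrow> supp M act x \<subseteq> C"
  by (auto simp: supp_def)

lemma not_in_supp: "z \<notin> supp M act x \<Longrightarrow> \<exists>C. finite C \<and> supports M act C x \<and> z \<notin> C"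
  by (auto simp: supp_def)

lemma supportsD: "supports M act C x \<Longrightarrow> m1 \<in> M \<Longrightarrow> m2 \<in> M \<Longrightarrow> (\<And>a. a \<in> C \<Longrightarrow> m1 a = m2 a) \<Longrightarrow> act m1 x = act m2 x"
  unfolding supports_def by blast

lemma Perm_sub: "Perm \<subseteq> Sb" by (auto simp: Perm_def)

lemma supports_Perm: "supports Sb act C x \<Longrightarrow> supports Perm act C x"
  using Perm_sub unfolding supports_def by blast

lemma supports_mono: "supports M act C x \<Longrightarrow> C \<subseteq> D \<Longrightarrow> supports M act D x"
  unfolding supports_def by blast

lemma Sb_comp: "m1 \<in> Sb \<Longrightarrow> m2 \<in> Sb \<Longrightarrow> m1 \<circ> m2 \<in> Sb"
proof -
  assume a: "m1 \<in> Sb" "m2 \<in> Sb"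
  have "{z. (m1 \<circ> m2) z \<noteq> z} \<subseteq> {z. m1 z \<noteq> z} \<union> {z. m2 z \<noteq> z}" by auto
  then show ?thesis using a unfolding Sb_def by (auto intro: finite_subset)
qed

lemma supports_int:
  assumes "supports Sb act C x" "supports Sb act D x"
  shows "supports Sb act (C \<inter> D) x"
  unfolding supports_def
proof (intro ballI impI)
  fix m1 m2 assume m: "m1 \<in> Sb" "m2 \<in> Sb" and ag: "\<forall>a\<in>C \<inter> D. m1 a = m2 a"
  define m where "m = (\<lambda>z. if z \<in> C then m1 z else m2 z)"
  have "{z. m z \<noteq> z} \<subseteq> {z. m1 z \<noteq> z} \<union> {z. m2 z \<noteq> z}" by (auto simp: m_def)
  then have mS: "m \<in> Sb" using m unfolding Sb_def by (auto intro: finite_subset)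
  have s1: "\<forall>m1\<in>Sb. \<forall>m2\<in>Sb. (\<forall>a\<in>C. m1 a = m2 a) \<longrightarrow> act m1 x = act m2 x"
    using assms(1) unfolding supports_def .
  have s2: "\<forall>m1\<in>Sb. \<forall>m2\<in>Sb. (\<forall>a\<in>D. m1 a = m2 a) \<longrightarrow> act m1 x = act m2 x"
    using assms(2) unfolding supports_def .
  have "act m x = act m1 x" by (rule supportsD[OF assms(1) mS m(1)]) (simp add: m_def)
  moreover have "act m x = act m2 x" by (rule supportsD[OF assms(2) mS m(2)]) (use ag in \<open>auto simp: m_def\<close>)
  ultimately show "act m1 x = act m2 x" by simp
qed

lemma supp_Sb_supports:
  assumes "nominal Sb act"
  shows "supports Sb act (supp Sb act x) x \<and> finite (supp Sb act x)"
proof -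
  define P where "P n = (\<exists>C. finite C \<and> supports Sb act C x \<and> card C = n)" for n
  have "\<exists>n. P n" using assms unfolding nominal_def P_def by blast
  then have "P (LEAST n. P n)" by (rule LeastI_ex)
  then obtain C where C: "finite C" "supports Sb act C x" "card C = (LEAST n. P n)"
    unfolding P_def by blast
  have sub: "C \<subseteq> D" if "finite D" "supports Sb act D x" for D
  proof -
    have f: "finite (C \<inter> D)" using C(1) by simp
    have "supports Sb act (C \<inter> D) x" by (rule supports_int[OF C(2) that(2)])
    then have "P (card (C \<inter> D))" unfolding P_def using f by blast
    then have "card C \<le> card (C \<inter> D)" using Least_le[of P] C(3) by simp
    then have "C \<inter> D = C" using card_seteq[OF C(1) inf_le1] by blast
    then show ?thesis by blast
  qed
  have "C \<subseteq> supp Sb act x" unfolding supp_def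
    by (rule Inter_greatest) (use sub in blast)
  then have "supp Sb act x = C"
    using supp_le[OF C(1,2)] by (rule antisym[rotated])
  then show ?thesis using C by simp
qed

lemma supp_delta:
  assumes aut: "nominal_automaton actQ actS actO \<delta> out q0"
  shows "supp Perm actQ (\<delta> x a) \<subseteq> supp Perm actQ x \<union> supp Perm actS a"
proof
  fix z assume z: "z \<in> supp Perm actQ (\<delta> x a)"
  show "z \<in> supp Perm actQ x \<union> supp Perm actS a"
  proof (rule ccontr)
    assume "z \<notin> supp Perm actQ x \<union> supp Perm actS a"
    then have "z \<notin> supp Perm actQ x" "z \<notin> supp Perm actS a" by auto
    then obtain C D where C: "finite C" "supports Perm actQ C x" "z \<notin> C"
      and D: "finite D" "supports Perm actS D a" "z \<notin> D"
      using not_in_supp[of z Perm actQ x] not_in_supp[of z Perm actS a] by blast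
    have eq: "\<forall>m\<in>Perm. \<forall>q a. \<delta> (actQ m q) (actS m a) = actQ m (\<delta> q a)"
      using aut unfolding nominal_automaton_def by (elim conjE)
    have "supports Perm actQ (C \<union> D) (\<delta> x a)"
      unfolding supports_def
    proof (intro ballI impI)
      fix m1 m2 assume m: "m1 \<in> Perm" "m2 \<in> Perm" and ag: "\<forall>a\<in>C \<union> D. m1 a = m2 a"
      have 1: "actQ m1 x = actQ m2 x" by (rule supportsD[OF C(2) m]) (simp add: ag)
      have 2: "actS m1 a = actS m2 a" by (rule supportsD[OF D(2) m]) (simp add: ag)
      have e1: "\<delta> (actQ m1 x) (actS m1 a) = actQ m1 (\<delta> x a)" using eq m(1) by simp
      have e2: "\<delta> (actQ m2 x) (actS m2 a) = actQ m2 (\<delta> x a)" using eq m(2) by simp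
      have "actQ m1 (\<delta> x a) = \<delta> (actQ m1 x) (actS m1 a)" using e1 by (rule sym)
      also have "\<dots> = \<delta> (actQ m2 x) (actS m2 a)" unfolding 1 2 ..
      also have "\<dots> = actQ m2 (\<delta> x a)" by (rule e2)
      finally show "actQ m1 (\<delta> x a) = actQ m2 (\<delta> x a)" .
    qed
    then have "supp Perm actQ (\<delta> x a) \<subseteq> C \<union> D" using C(1) D(1) by (intro supp_le) simp_all
    then show False using z C D by blast
  qed
qed

lemma supp_word: "supp Perm (wact act) w \<subseteq> (\<Union>b\<in>set w. supp Perm act b)"
proof
  fix z assume z: "z \<in> supp Perm (wact act) w"
  show "z \<in> (\<Union>b\<in>set w. supp Perm act b)"
  proof (rule ccontr)
    assume "z \<notin> (\<Union>b\<in>set w. supp Perm act b)"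
    then have "\<forall>b\<in>set w. \<exists>D. finite D \<and> supports Perm act D b \<and> z \<notin> D"
      using not_in_supp[of z Perm act] by blast
    from bchoice[OF this] obtain f where f: "\<forall>b\<in>set w. finite (f b) \<and> supports Perm act (f b) b \<and> z \<notin> f b"
      by blast
    have "supports Perm (wact act) (\<Union>b\<in>set w. f b) w"
      unfolding supports_def wact_def
    proof (intro ballI impI map_cong refl)
      fix m1 m2 b assume m: "m1 \<in> Perm" "m2 \<in> Perm" and ag: "\<forall>a\<in>(\<Union>b\<in>set w. f b). m1 a = m2 a"
        and b: "b \<in> set w"
      have "supports Perm act (f b) b" using f b by blast
      then show "act m1 b = act m2 b" by (rule supportsD[OF _ m]) (use ag b in blast)
    qed
    moreover have "finite (\<Union>b\<in>set w. f b)" using f by simp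
    ultimately have "supp Perm (wact act) w \<subseteq> (\<Union>b\<in>set w. f b)" by (intro supp_le)
    then show False using z f by blast
  qed
qed

lemma separated_ConsD:
  assumes "separated act (a # w)"
  shows "separated act w \<and> (\<forall>b\<in>set w. supp Perm act a \<inter> supp Perm act b = {})"
proof
  have H: "\<forall>i<length (a # w). \<forall>j<length (a # w). i \<noteq> j \<longrightarrow>
      supp Perm act ((a # w) ! i) \<inter> supp Perm act ((a # w) ! j) = {}"
    using assms unfolding separated_def .
  show "separated act w" unfolding separated_def
  proof (intro allI impI)
    fix i j assume "i < length w" "j < length w" "i \<noteq> j"
    then have "Suc i < length (a # w)" "Suc j < length (a # w)" "Suc i \<noteq> Suc j" by auto
    then have "supp Perm act ((a # w) ! Suc i) \<inter> supp Perm act ((a # w) ! Suc j) = {}"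
      by (rule H[rule_format])
    then show "supp Perm act (w ! i) \<inter> supp Perm act (w ! j) = {}" by simp
  qed
  show "\<forall>b\<in>set w. supp Perm act a \<inter> supp Perm act b = {}"
  proof
    fix b assume "b \<in> set w"
    then obtain j where "j < length w" "w ! j = b" by (auto simp: in_set_conv_nth)
    then have "0 < length (a # w)" "Suc j < length (a # w)" "(0::nat) \<noteq> Suc j" by auto
    then have "supp Perm act ((a # w) ! 0) \<inter> supp Perm act ((a # w) ! Suc j) = {}"
      by (rule H[rule_format])
    then show "supp Perm act a \<inter> supp Perm act b = {}" using \<open>w ! j = b\<close> by simp
  qed
qed

lemma sep_sem_ok:
  assumes aut: "nominal_automaton actQ actS actO \<delta> out q0"
  shows "separated actS w \<Longrightarrow> supp Perm actQ x \<inter> (\<Union>b\<in>set w. supp Perm actS b) = {}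
     \<Longrightarrow> sep_sem actQ actS \<delta> out x w = Some (sem \<delta> out x w)"
proof (induction w arbitrary: x)
  case Nil
  then show ?case by simp
next
  case (Cons a w)
  have sd: "separated actS w \<and> (\<forall>b\<in>set w. supp Perm actS a \<inter> supp Perm actS b = {})"
    by (rule separated_ConsD[OF Cons.prems(1)])
  then have st: "separated actS w" by (rule conjunct1)
  from sd have dj: "\<forall>b\<in>set w. supp Perm actS a \<inter> supp Perm actS b = {}" by (rule conjunct2)
  have p: "supp Perm actQ x \<inter> supp Perm actS a = {}"
     "supp Perm actQ x \<inter> (\<Union>b\<in>set w. supp Perm actS b) = {}"
    using Cons.prems(2) by auto
  have w1: "supp Perm (wact actS) (a # w) \<subseteq> supp Perm actS a \<union> (\<Union>b\<in>set w. supp Perm actS b)"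
    using supp_word[of actS "a # w"] by simp
  have c1: "supp Perm actQ x \<inter> supp Perm (wact actS) (a # w) = {}"
    using w1 p by blast
  have c2: "supp Perm actS a \<inter> supp Perm (wact actS) w = {}"
    using supp_word[of actS w] dj by blast
  have sdx: "supp Perm actQ (\<delta> x a) \<subseteq> supp Perm actQ x \<union> supp Perm actS a"
    by (rule supp_delta[OF aut])
  have dx: "supp Perm actQ (\<delta> x a) \<inter> (\<Union>b\<in>set w. supp Perm actS b) = {}"
    using sdx p(2) dj by blast
  have ih: "sep_sem actQ actS \<delta> out (\<delta> x a) w = Some (sem \<delta> out (\<delta> x a) w)"
    by (rule Cons.IH[OF st dx])
  have "sep_sem actQ actS \<delta> out x (a # w) = sep_sem actQ actS \<delta> out (\<delta> x a) w"
    by (subst sep_sem.simps(2)) (simp only: c1 c2 simp_thms if_True)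
  then show ?case using ih by simp
qed

lemma supports_img:
  assumes "is_Mset Sb act" "supports Sb act C a" "\<sigma> \<in> Sb"
  shows "supports Sb act (\<sigma> ` C) (act \<sigma> a)"
  unfolding supports_def
proof (intro ballI impI)
  fix m1 m2 assume m: "m1 \<in> Sb" "m2 \<in> Sb" and ag: "\<forall>z\<in>\<sigma> ` C. m1 z = m2 z"
  have ag2: "\<forall>c\<in>C. (m1 \<circ> \<sigma>) c = (m2 \<circ> \<sigma>) c" using ag by simp
  have sup: "\<forall>m1\<in>Sb. \<forall>m2\<in>Sb. (\<forall>c\<in>C. m1 c = m2 c) \<longrightarrow> act m1 a = act m2 a"
    using assms(2) unfolding supports_def .
  have e: "act (m1 \<circ> \<sigma>) a = act (m2 \<circ> \<sigma>) a"
    by (rule supportsD[OF assms(2) Sb_comp[OF m(1) assms(3)] Sb_comp[OF m(2) assms(3)]]) (use ag2 in simp)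
  have c: "\<forall>m1\<in>Sb. \<forall>m2\<in>Sb. \<forall>x. act (m1 \<circ> m2) x = act m1 (act m2 x)"
    using assms(1) unfolding is_Mset_def by blast
  have "act (m1 \<circ> \<sigma>) a = act m1 (act \<sigma> a)" "act (m2 \<circ> \<sigma>) a = act m2 (act \<sigma> a)"
    using c m assms(3) by simp_all
  then show "act m1 (act \<sigma> a) = act m2 (act \<sigma> a)" using e by simp
qed

lemma decomp:
  assumes nom: "nominal Sb actS" and dim: "dim_le_1 Sb actS"
  shows "\<exists>m w'. m \<in> Sb \<and> separated actS w' \<and> wact actS m w' = w"
proof -
  have ism: "is_Mset Sb actS" using nom unfolding nominal_def by blast
  have ex1: "\<exists>x. supports Sb actS {x} b" for b
  proof -
    have s: "supports Sb actS (supp Sb actS b) b" "finite (supp Sb actS b)"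
      using supp_Sb_supports[OF nom] by auto
    have "card (supp Sb actS b) \<le> 1" using dim unfolding dim_le_1_def by blast
    then have al: "\<forall>a\<in>supp Sb actS b. \<forall>c\<in>supp Sb actS b. a = c"
      using card_le_Suc0_iff_eq[OF s(2)] by simp
    have "\<exists>x. supp Sb actS b \<subseteq> {x}"
    proof (cases "supp Sb actS b = {}")
      case True then show ?thesis by blast
    next
      case False then obtain y where "y \<in> supp Sb actS b" by blast
      then show ?thesis using al by blast
    qed
    then obtain x where "supp Sb actS b \<subseteq> {x}" by blast
    then have "supports Sb actS {x} b" by (rule supports_mono[OF s(1)])
    then show ?thesis by blast
  qed
  define x where "x i = (SOME x. supports Sb actS {x} (w ! i))" for i
  have xs: "supports Sb actS {x i} (w ! i)" for i
    unfolding x_def by (rule someI_ex[OF ex1])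
  define n where "n = length w"
  define sg where "sg i = id (x i := i)" for i
  have sgS: "sg i \<in> Sb" for i
  proof -
    have "{z. sg i z \<noteq> z} \<subseteq> {x i}" by (auto simp: sg_def)
    then show ?thesis unfolding Sb_def by (auto intro: finite_subset)
  qed
  define m where "m z = (if z < n then x z else z)" for z
  have mS: "m \<in> Sb"
  proof -
    have "{z. m z \<noteq> z} \<subseteq> {..<n}" by (auto simp: m_def)
    then show ?thesis unfolding Sb_def by (auto intro: finite_subset)
  qed
  define w' where "w' = map (\<lambda>i. actS (sg i) (w ! i)) [0..<n]"
  have sup': "supp Perm actS (w' ! i) \<subseteq> {i}" if "i < n" for i
  proof -
    have "supports Sb actS (sg i ` {x i}) (actS (sg i) (w ! i))"
      using supports_img[OF ism xs sgS] .
    then have "supports Perm actS {i} (w' ! i)"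
      using that by (simp add: w'_def sg_def supports_Perm)
    then show ?thesis by (rule supp_le[rotated]) simp
  qed
  have sep: "separated actS w'"
    unfolding separated_def
  proof (intro allI impI)
    fix i j assume "i < length w'" "j < length w'" "i \<noteq> j"
    then show "supp Perm actS (w' ! i) \<inter> supp Perm actS (w' ! j) = {}"
      using sup'[of i] sup'[of j] by (auto simp: w'_def)
  qed
  have "wact actS m w' = w"
  proof (rule nth_equalityI)
    show "length (wact actS m w') = length w" by (simp add: wact_def w'_def n_def)
    fix i assume "i < length (wact actS m w')"
    then have i: "i < n" by (simp add: wact_def w'_def)
    have "wact actS m w' ! i = actS m (actS (sg i) (w ! i))"
      using i by (simp add: wact_def w'_def)
    also have "\<dots> = actS (m \<circ> sg i) (w ! i)"
    proof -
      have c: "\<forall>m1\<in>Sb. \<forall>m2\<in>Sb. \<forall>x. actS (m1 \<circ> m2) x = actS m1 (actS m2 x)"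
        using ism unfolding is_Mset_def by blast
      show ?thesis using c mS sgS[of i] by simp
    qed
    also have "\<dots> = actS id (w ! i)"
    proof -
      have e: "\<forall>a\<in>{x i}. (m \<circ> sg i) a = id a" using i by (simp add: sg_def m_def)
      have idS: "id \<in> Sb" by (simp add: Sb_def)
      show ?thesis by (rule supportsD[OF xs[of i] Sb_comp[OF mS sgS] idS]) (use e in simp)
    qed
    also have "\<dots> = w ! i" using ism unfolding is_Mset_def by blast
    finally show "wact actS m w' ! i = w ! i" .
  qed
  then show ?thesis using mS sep by blast
qed

theorem mainTheorem10:
  fixes actS :: "(atom \<Rightarrow> atom) \<Rightarrow> 's \<Rightarrow> 's"
    and actO :: "(atom \<Rightarrow> atom) \<Rightarrow> 'o \<Rightarrow> 'o"
    and actQ :: "(atom \<Rightarrow> atom) \<Rightarrow> 'q \<Rightarrow> 'q"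
    and \<delta> :: "'q \<Rightarrow> 's \<Rightarrow> 'q" and out :: "'q \<Rightarrow> 'o" and q0 :: 'q
  assumes "nominal Sb actS" and "nominal Sb actO"
    and "dim_le_1 Sb actS"
    and "nominal_automaton actQ actS actO \<delta> out q0"
    and "equivariant Sb (wact actS) actO (accepted \<delta> out q0)"
  shows "accepted \<delta> out q0 = Sb_ext actS actO (sep_accepted actQ actS \<delta> out q0)"
proof -
  let ?L = "accepted \<delta> out q0"
  let ?S = "sep_accepted actQ actS \<delta> out q0"
  let ?P = "\<lambda>F. equivariant Sb (wact actS) actO F \<and> (\<forall>w. separated actS w \<longrightarrow> ?S w = Some (F w))"
  have q0: "supp Perm actQ q0 = {}" using assms(4) unfolding nominal_automaton_def by (elim conjE)
  have PL: "?P ?L"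
  proof (intro conjI allI impI)
    show "equivariant Sb (wact actS) actO ?L" by (rule assms(5))
    fix w assume "separated actS w"
    then show "?S w = Some (?L w)"
      using sep_sem_ok[OF assms(4), of w q0] q0
      by (simp add: sep_accepted_def accepted_def)
  qed
  have U: "F = ?L" if "?P F" for F
  proof
    fix w
    obtain m w' where mw: "m \<in> Sb" "separated actS w'" "wact actS m w' = w"
      using decomp[OF assms(1,3)] by blast
    have "?S w' = Some (F w')" using that mw(2) by blast
    moreover have "?S w' = Some (?L w')" using PL mw(2) by blast
    ultimately have e: "F w' = ?L w'" by simp
    have eF: "\<forall>m\<in>Sb. \<forall>x. F (wact actS m x) = actO m (F x)" using that unfolding equivariant_def by blast
    have "F w = F (wact actS m w')" using mw(3) by simp
    also have "\<dots> = actO m (F w')" using eF mw(1) by simp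
    also have "\<dots> = actO m (?L w')" using e by simp
    also have "\<dots> = ?L (wact actS m w')"
      using assms(5) mw(1) unfolding equivariant_def by simp
    also have "\<dots> = ?L w" using mw(3) by simp
    finally show "F w = ?L w" .
  qed
  have "(THE F. ?P F) = ?L" by (rule the_equality[where P = ?P, OF PL U])
  then show ?thesis unfolding Sb_ext_def by simp
qed

end
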